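(* Let $\mathrm{Lab}$ be a labelling system on a finite simplicial tree $T$. Then the union of the useful edges of $T$ (together with their endpoints) is connected, i.e. forms a subtree of $T$: every edge lying on the path in $T$ between two useful edges is useful.
   Context: A labelling system on a finite simplicial tree $T$ assigns to each vertex $v$ a subset $\mathrm{Lab}(v)\subset\{1,\dots,N\}$ such that (A) $\mathrm{Lab}(a)\cap\mathrm{Lab}(b)\subset\mathrm{Lab}(x)$ whenever $x$ is a vertex on the shortest path between vertices $a,b$, and (B) $\bigcup_v\mathrm{Lab}(v)=\{1,\dots,N\}$. Removing the open edge $e$ leaves two closed connected components $T^+(e)$, $T^-(e)$. The edge $e$ is useless if $\bigcup_{v\in T^+(e)}\mathrm{Lab}(v)$ or $\bigcup_{v\in T^-(e)}\mathrm{Lab}(v)$ equals $\{1,\dots,N\}$, and useful otherwise. *)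

theory Defs
  imports Main
begin

definition is_path :: "'v set set \<Rightarrow> 'v list \<Rightarrow> bool" where
  "is_path E xs \<longleftrightarrow> xs \<noteq> [] \<and> distinct xs \<and>
     (\<forall>i. Suc i < length xs \<longrightarrow> {xs ! i, xs ! Suc i} \<in> E)"

definition path_edges :: "'v list \<Rightarrow> 'v set set" where
  "path_edges xs = {{xs ! i, xs ! Suc i} | i. Suc i < length xs}"

definition simplicial_tree :: "'v set \<Rightarrow> 'v set set \<Rightarrow> bool" where
  "simplicial_tree V E \<longleftrightarrow> finite V \<and> V \<noteq> {} \<and>
     E \<subseteq> {{a, b} | a b. a \<in> V \<and> b \<in> V \<and> a \<noteq> b} \<and>
     (\<forall>a\<in>V. \<forall>b\<in>V. \<exists>!xs. is_path E xs \<and> hd xs = a \<and> last xs = b)"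

definition tpath :: "'v set set \<Rightarrow> 'v \<Rightarrow> 'v \<Rightarrow> 'v list" where
  "tpath E a b = (THE xs. is_path E xs \<and> hd xs = a \<and> last xs = b)"

definition labelling_system ::
  "'v set \<Rightarrow> 'v set set \<Rightarrow> nat \<Rightarrow> ('v \<Rightarrow> nat set) \<Rightarrow> bool" where
  "labelling_system V E N Lab \<longleftrightarrow>
     (\<forall>v\<in>V. Lab v \<subseteq> {1..N}) \<and>
     (\<forall>a\<in>V. \<forall>b\<in>V. \<forall>x\<in>set (tpath E a b). Lab a \<inter> Lab b \<subseteq> Lab x) \<and>
     (\<Union>v\<in>V. Lab v) = {1..N}"

text \<open>The closed component containing the endpoint u of e after removing the open edge e.\<close>

definition side :: "'v set \<Rightarrow> 'v set set \<Rightarrow> 'v set \<Rightarrow> 'v \<Rightarrow> 'v set" where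
  "side V E e u = {x \<in> V. \<exists>xs. is_path (E - {e}) xs \<and> hd xs = u \<and> last xs = x}"

definition useful ::
  "'v set \<Rightarrow> 'v set set \<Rightarrow> nat \<Rightarrow> ('v \<Rightarrow> nat set) \<Rightarrow> 'v set \<Rightarrow> bool" where
  "useful V E N Lab e \<longleftrightarrow> e \<in> E \<and>
     (\<forall>u\<in>e. (\<Union>x\<in>side V E e u. Lab x) \<noteq> {1..N})"

end

theory Submission
  imports Defs
begin

definition R :: "'v set set \<Rightarrow> ('v \<times> 'v) set" where
  "R F = {(x,y). {x,y} \<in> F}"

lemma R_sym: "(x,y) \<in> (R F)\<^sup>* \<Longrightarrow> (y,x) \<in> (R F)\<^sup>*"
proof -
  have "sym (R F)" by (auto simp: R_def sym_def insert_commute)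
  hence "sym ((R F)\<^sup>*)" by (rule sym_rtrancl)
  thus "(x,y) \<in> (R F)\<^sup>* \<Longrightarrow> (y,x) \<in> (R F)\<^sup>*" by (auto dest: symD)
qed

lemma path_reach_k:
  assumes "is_path F xs" "k < length xs"
  shows "(xs!0, xs!k) \<in> (R F)\<^sup>*"
  using assms(2)
proof (induction k)
  case 0 then show ?case by simp
next
  case (Suc k)
  then have "{xs!k, xs!Suc k} \<in> F" using assms(1) by (auto simp: is_path_def)
  with Suc show ?case by (auto simp: R_def intro: rtrancl_into_rtrancl)
qed

lemma path_reach:
  assumes "is_path F xs"
  shows "(hd xs, last xs) \<in> (R F)\<^sup>*"
proof -
  have ne: "xs \<noteq> []" using assms by (simp add: is_path_def)
  show ?thesis using path_reach_k[OF assms, of "length xs - 1"] ne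
    by (simp add: hd_conv_nth last_conv_nth)
qed

lemma reach_path:
  assumes "(x,y) \<in> (R F)\<^sup>*"
  shows "\<exists>xs. is_path F xs \<and> hd xs = x \<and> last xs = y"
  using assms
proof (induction rule: rtrancl_induct)
  case base
  show ?case by (rule exI[of _ "[x]"]) (simp add: is_path_def)
next
  case (step y z)
  then obtain xs where xs: "is_path F xs" "hd xs = x" "last xs = y" by blast
  have yz: "{y,z} \<in> F" using step by (simp add: R_def)
  have ne: "xs \<noteq> []" using xs by (simp add: is_path_def)
  show ?case
  proof (cases "z \<in> set xs")
    case True
    then obtain k where k: "k < length xs" "xs!k = z" by (auto simp: in_set_conv_nth)
    let ?ys = "take (Suc k) xs"
    have "is_path F ?ys"
      using xs(1) k unfolding is_path_def by auto
    moreover have "hd ?ys = x" using xs ne by (simp add: hd_conv_nth)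
    moreover have "last ?ys = z"
    proof -
      have "length ?ys = Suc k" using k by simp
      then show ?thesis using k by (simp add: take_Suc_conv_app_nth)
    qed
    ultimately show ?thesis by blast
  next
    case False
    let ?ys = "xs @ [z]"
    have "is_path F ?ys"
      unfolding is_path_def
    proof (intro conjI allI impI)
      show "?ys \<noteq> []" by simp
      show "distinct ?ys" using xs(1) False by (simp add: is_path_def)
    next
      fix i assume i: "Suc i < length ?ys"
      show "{?ys ! i, ?ys ! Suc i} \<in> F"
      proof (cases "Suc i < length xs")
        case True
        then show ?thesis using xs(1) by (simp add: nth_append is_path_def)
      next
        case False
        then have "i = length xs - 1" using i by simp
        then show ?thesis using yz xs(3) ne by (simp add: nth_append last_conv_nth)
      qed
    qed
    moreover have "hd ?ys = x" using xs ne by simp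
    moreover have "last ?ys = z" by simp
    ultimately show ?thesis by blast
  qed
qed

lemma side_eq: "side V E e u = {x \<in> V. (u,x) \<in> (R (E - {e}))\<^sup>*}"
proof (rule set_eqI, rule iffI)
  fix x assume "x \<in> side V E e u"
  then obtain xs where "x \<in> V" "is_path (E - {e}) xs" "hd xs = u" "last xs = x"
    unfolding side_def by blast
  moreover have "(hd xs, last xs) \<in> (R (E - {e}))\<^sup>*" by (rule path_reach) fact
  ultimately show "x \<in> {x \<in> V. (u,x) \<in> (R (E - {e}))\<^sup>*}" by simp
next
  fix x assume "x \<in> {x \<in> V. (u,x) \<in> (R (E - {e}))\<^sup>*}"
  then have "x \<in> V" "(u,x) \<in> (R (E - {e}))\<^sup>*" by auto
  moreover obtain xs where "is_path (E - {e}) xs" "hd xs = u" "last xs = x"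
    using reach_path[OF \<open>(u,x) \<in> _\<close>] by blast
  ultimately show "x \<in> side V E e u" unfolding side_def by (intro CollectI conjI exI[of _ xs]) auto
qed

lemma edge_in_V:
  assumes "simplicial_tree V E" "{p,q} \<in> E"
  shows "p \<in> V" "q \<in> V"
proof -
  have "E \<subseteq> {{a, b} | a b. a \<in> V \<and> b \<in> V \<and> a \<noteq> b}"
    using assms(1) by (simp add: simplicial_tree_def)
  then obtain c d where "{p,q} = {c,d}" "c \<in> V" "d \<in> V" using assms(2) by blast
  then show "p \<in> V" "q \<in> V" by (auto simp: doubleton_eq_iff)
qed

lemma mem_edge_V:
  assumes T: "simplicial_tree V E" and f: "f \<in> E" and x: "x \<in> f"
  shows "x \<in> V"
proof -
  have ET: "E \<subseteq> {{a, b} | a b. a \<in> V \<and> b \<in> V \<and> a \<noteq> b}"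
    using T by (simp add: simplicial_tree_def)
  have "f \<in> {{a, b} | a b. a \<in> V \<and> b \<in> V \<and> a \<noteq> b}" using f ET by (rule subsetD[rotated])
  then obtain c d where "f = {c,d}" "c \<in> V" "d \<in> V" by blast
  then show ?thesis using x by blast
qed

lemma is_path_mono: "is_path F xs \<Longrightarrow> F \<subseteq> G \<Longrightarrow> is_path G xs"
  by (auto simp: is_path_def)

lemma lemL:
  assumes T: "simplicial_tree V E" and p: "is_path E ys" and l: "length ys \<ge> 2"
    and e: "e = {ys!0, ys!1}"
    and r: "(hd ys, last ys) \<in> (R (E - {e}))\<^sup>*"
  shows False
proof -
  obtain zs where zs: "is_path (E - {e}) zs" "hd zs = hd ys" "last zs = last ys"
    using reach_path[OF r] by blast
  have eE: "{ys!0, ys!Suc 0} \<in> E" using p l by (auto simp: is_path_def)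
  have "{ys!(length ys - 2), ys!Suc (length ys - 2)} \<in> E" using p l by (auto simp: is_path_def)
  moreover have "Suc (length ys - 2) = length ys - 1" using l by simp
  ultimately have eL: "{ys!(length ys - 2), ys!(length ys - 1)} \<in> E" by simp
  have yne: "ys \<noteq> []" using l by auto
  have hV: "hd ys \<in> V" using edge_in_V[OF T eE] yne by (simp add: hd_conv_nth)
  have lV: "last ys \<in> V" using edge_in_V[OF T eL] yne by (simp add: last_conv_nth)
  have u: "\<exists>!xs. is_path E xs \<and> hd xs = hd ys \<and> last xs = last ys"
    using T hV lV by (simp add: simplicial_tree_def)
  have "is_path E zs" using is_path_mono[OF zs(1)] by blast
  with u p zs have "zs = ys" by blast
  with zs(1) l have "{ys!0, ys!Suc 0} \<in> E - {e}" by (auto simp: is_path_def)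
  with e show False by simp
qed

lemma lemM:
  assumes T: "simplicial_tree V E" and L: "labelling_system V E N Lab"
    and f: "useful V E N Lab f" and eE: "e \<in> E" and ef: "e \<noteq> f"
    and u: "u \<in> e" and t: "t \<in> f"
    and nt: "(u,t) \<notin> (R (E - {e}))\<^sup>*"
  shows "(\<Union>x\<in>side V E e u. Lab x) \<noteq> {1..N}"
proof
  assume full: "(\<Union>x\<in>side V E e u. Lab x) = {1..N}"
  have fE: "f \<in> E" using f by (simp add: useful_def)
  have ET: "E \<subseteq> {{a, b} | a b. a \<in> V \<and> b \<in> V \<and> a \<noteq> b}"
    using T by (simp add: simplicial_tree_def)
  have "f \<in> {{a, b} | a b. a \<in> V \<and> b \<in> V \<and> a \<noteq> b}" using fE ET by (rule subsetD[rotated])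
  then obtain c d where cd: "f = {c,d}" by blast
  define t' where "t' = (if t = c then d else c)"
  have f': "f = {t,t'}" using t cd unfolding t'_def by auto
  have "e \<in> {{a, b} | a b. a \<in> V \<and> b \<in> V \<and> a \<noteq> b}" using eE ET by (rule subsetD[rotated])
  then obtain c' d' where cd': "e = {c',d'}" by blast
  define u' where "u' = (if u = c' then d' else c')"
  have e': "e = {u,u'}" using u cd' unfolding u'_def by auto
  have uV: "u \<in> V" using edge_in_V(1)[OF T, of u u'] eE e' by simp
  have tV: "t \<in> V" using edge_in_V(1)[OF T, of t t'] fE f' by simp
  have nt': "(u,t') \<notin> (R (E - {e}))\<^sup>*"
  proof
    assume "(u,t') \<in> (R (E - {e}))\<^sup>*"
    moreover have "(t',t) \<in> R (E - {e})" using fE ef f' by (auto simp: R_def insert_commute)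
    ultimately have "(u,t) \<in> (R (E - {e}))\<^sup>*" by (rule rtrancl_into_rtrancl)
    with nt show False by simp
  qed
  have nf: "y \<notin> f" if "(u,y) \<in> (R (E - {e}))\<^sup>*" for y
  proof
    assume "y \<in> f"
    then have "y = t \<or> y = t'" using f' by blast
    then show False using that nt nt' by blast
  qed
  have conn: "\<exists>p\<in>f. (p,u) \<in> (R (E - {f}))\<^sup>* \<or> (u,y) \<in> (R (E - {f}))\<^sup>*"
    if "(u,y) \<in> (R E)\<^sup>*" for y
    using that
  proof (induction rule: rtrancl_induct)
    case base
    have "(u,u) \<in> (R (E - {f}))\<^sup>*" by (rule rtrancl_refl)
    then show ?case using t by (intro bexI[of _ t]) auto
  next
    case (step y z)
    then obtain p where p: "p \<in> f" "(p,u) \<in> (R (E - {f}))\<^sup>* \<or> (u,y) \<in> (R (E - {f}))\<^sup>*" by blast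
    show ?case
    proof (cases "(p,u) \<in> (R (E - {f}))\<^sup>*")
      case True then show ?thesis using p(1) by (intro bexI[of _ p]) auto
    next
      case False
      then have uy: "(u,y) \<in> (R (E - {f}))\<^sup>*" using p by blast
      show ?thesis
      proof (cases "{y,z} = f")
        case True
        then have "y \<in> f" by blast
        then show ?thesis using R_sym[OF uy] by (intro bexI[of _ y]) auto
      next
        case False
        then have "(y,z) \<in> R (E - {f})" using step by (simp add: R_def)
        then have "(u,z) \<in> (R (E - {f}))\<^sup>*" using uy by simp
        then show ?thesis using p(1) by (intro bexI[of _ p]) auto
      qed
    qed
  qed
  have uniq: "\<exists>!xs. is_path E xs \<and> hd xs = u \<and> last xs = t"
    using T uV tV by (simp add: simplicial_tree_def)
  then obtain xs where "is_path E xs" "hd xs = u" "last xs = t" by (meson ex1_implies_ex)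
  then have "(u,t) \<in> (R E)\<^sup>*" using path_reach[of E xs] by simp
  from conn[OF this] obtain p0 where p0: "p0 \<in> f" "(p0,u) \<in> (R (E - {f}))\<^sup>* \<or> (u,t) \<in> (R (E - {f}))\<^sup>*"
    by (rule bexE)
  obtain p where p: "p \<in> f" "(p,u) \<in> (R (E - {f}))\<^sup>*"
  proof (cases "(p0,u) \<in> (R (E - {f}))\<^sup>*")
    case True show ?thesis by (rule that[OF p0(1) True])
  next
    case False
    then have ut: "(u,t) \<in> (R (E - {f}))\<^sup>*" using p0(2) by blast
    show ?thesis by (rule that[OF t R_sym[OF ut]])
  qed
  have sub: "(u,x) \<in> (R (E - {f}))\<^sup>*" if "(u,x) \<in> (R (E - {e}))\<^sup>*" for x
    using that
  proof (induction rule: rtrancl_induct)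
    case base then show ?case by simp
  next
    case (step y z)
    have "y \<notin> f" using nf step(1) by blast
    then have "{y,z} \<noteq> f" by auto
    then have "(y,z) \<in> R (E - {f})" using step(2) by (simp add: R_def)
    then show ?case using step(3) by (simp add: rtrancl_into_rtrancl)
  qed
  have "side V E e u \<subseteq> side V E f p"
  proof
    fix x assume "x \<in> side V E e u"
    then have x: "x \<in> V" "(u,x) \<in> (R (E - {e}))\<^sup>*" unfolding side_eq by auto
    have "(p,x) \<in> (R (E - {f}))\<^sup>*" using p(2) sub[OF x(2)] by (rule rtrancl_trans)
    then show "x \<in> side V E f p" using x(1) unfolding side_eq by simp
  qed
  then have "{1..N} \<subseteq> (\<Union>x\<in>side V E f p. Lab x)" using full by blast
  moreover have "(\<Union>x\<in>side V E f p. Lab x) \<subseteq> {1..N}"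
  proof -
    have "\<forall>v\<in>V. Lab v \<subseteq> {1..N}" using L unfolding labelling_system_def by blast
    moreover have "side V E f p \<subseteq> V" unfolding side_def by blast
    ultimately show ?thesis by blast
  qed
  ultimately have "(\<Union>x\<in>side V E f p. Lab x) = {1..N}" by blast
  with f p(1) show False by (simp add: useful_def)
qed

theorem mainTheorem11:
  fixes V :: "'v set" and E :: "'v set set" and N :: nat and Lab :: "'v \<Rightarrow> nat set"
  assumes "simplicial_tree V E"
    and "labelling_system V E N Lab"
    and "useful V E N Lab e1" and "useful V E N Lab e2"
    and "a \<in> e1" and "b \<in> e2"
    and "e \<in> path_edges (tpath E a b)"
  shows "useful V E N Lab e"
proof -
  note T = assms(1)
  have ET: "E \<subseteq> {{a, b} | a b. a \<in> V \<and> b \<in> V \<and> a \<noteq> b}"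
    using T by (simp add: simplicial_tree_def)
  have e1E: "e1 \<in> E" and e2E: "e2 \<in> E" using assms(3,4) by (auto simp: useful_def)
  have aV: "a \<in> V" by (rule mem_edge_V[OF T e1E assms(5)])
  have bV: "b \<in> V" by (rule mem_edge_V[OF T e2E assms(6)])
  have "\<exists>!xs. is_path E xs \<and> hd xs = a \<and> last xs = b"
    using T aV bV by (simp add: simplicial_tree_def)
  then have "is_path E (tpath E a b) \<and> hd (tpath E a b) = a \<and> last (tpath E a b) = b"
    unfolding tpath_def by (rule theI')
  then have xs: "is_path E (tpath E a b)" "hd (tpath E a b) = a" "last (tpath E a b) = b"
    by auto
  define xs where "xs = tpath E a b"
  have "e \<in> {{xs ! i, xs ! Suc i} | i. Suc i < length xs}"
    using assms(7) unfolding xs_def path_edges_def .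
  then obtain i where i: "e = {xs!i, xs!Suc i}" "Suc i < length xs"
    by blast
  have p: "is_path E xs" "hd xs = a" "last xs = b" using xs unfolding xs_def by auto
  have eE: "e \<in> E" using p(1) i unfolding is_path_def by blast
  show ?thesis
    unfolding useful_def
  proof (intro conjI ballI)
    show "e \<in> E" by (rule eE)
  next
    fix u assume u: "u \<in> e"
    show "(\<Union>x\<in>side V E e u. Lab x) \<noteq> {1..N}"
    proof (cases "u = xs!i")
      case True
      show ?thesis
      proof (cases "e = e2")
        case True then show ?thesis using assms(4) u by (simp add: useful_def)
      next
        case False
        let ?ys = "drop i xs"
        have yp: "is_path E ?ys" using p(1) i(2) by (auto simp: is_path_def)
        have l2: "length ?ys \<ge> 2" using i(2) by simp
        have "?ys ! 0 = xs ! i" "?ys ! 1 = xs ! Suc i" using i(2) by auto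
        then have "(hd ?ys, last ?ys) \<notin> (R (E - {e}))\<^sup>*"
          using lemL[OF T yp l2] i(1) by auto
        then have "(u,b) \<notin> (R (E - {e}))\<^sup>*"
          using True i(2) p(3) by (simp add: hd_drop_conv_nth)
        then show ?thesis using lemM[OF T assms(2) assms(4) eE False u assms(6)] by blast
      qed
    next
      case False
      then have uS: "u = xs!Suc i" using u i(1) by auto
      show ?thesis
      proof (cases "e = e1")
        case True then show ?thesis using assms(3) u by (simp add: useful_def)
      next
        case False
        let ?zs = "take (Suc (Suc i)) xs"
        let ?ys = "rev ?zs"
        have zp: "is_path E ?zs" using p(1) i(2) unfolding is_path_def by auto
        have yp: "is_path E ?ys" unfolding is_path_def
        proof (intro conjI allI impI)
          show "?ys \<noteq> []" using i(2) by auto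
          show "distinct ?ys" using zp by (simp add: is_path_def)
        next
          fix j assume j: "Suc j < length ?ys"
          have lz: "length ?zs = Suc (Suc i)" using i(2) by simp
          have "{?zs ! (i - j), ?zs ! Suc (i - j)} \<in> E"
          proof -
            have "Suc (i - j) < length ?zs" using j lz by simp
            then show ?thesis using zp unfolding is_path_def by blast
          qed
          moreover have "?ys ! j = ?zs ! Suc (i - j)" "?ys ! Suc j = ?zs ! (i - j)"
            using j lz by (auto simp: rev_nth Suc_diff_le)
          ultimately show "{?ys ! j, ?ys ! Suc j} \<in> E" by (simp add: insert_commute)
        qed
        have lz: "length ?zs = Suc (Suc i)" using i(2) by simp
        have y0: "?ys ! 0 = xs ! Suc i" and y1: "?ys ! 1 = xs ! i"
          using lz by (auto simp: rev_nth)
        have l2: "length ?ys \<ge> 2" using lz by simp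
        have ee: "e = {?ys ! 0, ?ys ! 1}" using i(1) y0 y1 by (simp add: insert_commute)
        have "(hd ?ys, last ?ys) \<notin> (R (E - {e}))\<^sup>*"
          using lemL[OF T yp l2 ee] by blast
        moreover have "hd ?ys = u" using uS lz i(2) by (auto simp: hd_rev take_Suc_conv_app_nth)
        moreover have "last ?ys = a" using p(2) lz i(2) by (auto simp: last_rev)
        ultimately have "(u,a) \<notin> (R (E - {e}))\<^sup>*" by simp
        then show ?thesis using lemM[OF T assms(2) assms(3) eE False u assms(5)] by blast
      qed
    qed
  qed
qed

end
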